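(* There exists a deal and a legal game that is a tranca mínima (as defined in the context) in which the winning team obtains $107$ points.
   Context: Domino tiles: the set of tiles consists of the 28 unordered pairs $[a,b]=[b,a]$ with $a,b\in\{0,1,\dots,6\}$; the number of points (pips) of $[a,b]$ is $a+b$. Four players, numbered 1 to 4, play; players 1 and 3 form one team and players 2 and 4 the other. The 28 tiles are dealt, 7 to each player (the initial hands). Players take turns in cyclic order $1,2,3,4,1,\dots$. The starting player places any one of their tiles on the table, forming a line of tiles (the board) with two open ends. On each subsequent turn, the player whose turn it is must, if they hold a tile containing a number equal to the number shown at one of the two open ends, place such a tile at that end (with equal numbers adjacent), the other number of the tile becoming the new open end; if they hold no such tile, they pass. A game ends either when a player places their last tile, or in a tranca (blocked game): a position in which no player holds a tile that can be placed. In a game ending in a tranca, the team whose two players' remaining tiles have the smaller total number of pips wins, and it obtains as points the total number of pips on the tiles remaining in the hands of the two players of the other (losing) team. A tranca mínima is a game ending in a tranca in which the total number of pips on the tiles of the board at the end of the game is $42$. *)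

theory Defs
  imports Main
begin

text \<open>Tiles [a,b] are represented as pairs (a,b) with a \<le> b \<le> 6.
  Players 1,2,3,4 are represented by 0,1,2,3; teams are {0,2} (players 1,3)
  and {1,3} (players 2,4).\<close>

type_synonym tile = "nat \<times> nat"
type_synonym ends = "(nat \<times> nat) option"

definition all_tiles :: "tile set" where
  "all_tiles = {(a, b). a \<le> b \<and> b \<le> 6}"

definition pips :: "tile \<Rightarrow> nat" where
  "pips t = fst t + snd t"

definition matches :: "tile \<Rightarrow> nat \<Rightarrow> bool" where
  "matches t x \<longleftrightarrow> fst t = x \<or> snd t = x"

definition other :: "tile \<Rightarrow> nat \<Rightarrow> nat" where
  "other t x = (if fst t = x then snd t else fst t)"

definition playable :: "tile set \<Rightarrow> nat \<times> nat \<Rightarrow> bool" where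
  "playable h e \<longleftrightarrow> (\<exists>t\<in>h. matches t (fst e) \<or> matches t (snd e))"

definition is_deal :: "(nat \<Rightarrow> tile set) \<Rightarrow> bool" where
  "is_deal H \<longleftrightarrow> (\<forall>p<4. H p \<subseteq> all_tiles \<and> card (H p) = 7)
     \<and> (\<forall>p<4. \<forall>q<4. p \<noteq> q \<longrightarrow> H p \<inter> H q = {})
     \<and> (\<Union>p<4. H p) = all_tiles"

text \<open>A move: pass, or place a tile at the left (True) or right (False) open end.
  For the very first move the side is irrelevant.\<close>
datatype move = Pass | Play tile bool

definition step :: "nat \<Rightarrow> (nat \<Rightarrow> tile set) \<Rightarrow> ends \<Rightarrow> tile list \<Rightarrow> move
    \<Rightarrow> ((nat \<Rightarrow> tile set) \<times> ends \<times> tile list) option" where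
  "step p H E B m = (case m of
     Pass \<Rightarrow> (case E of None \<Rightarrow> None
              | Some e \<Rightarrow> if playable (H p) e then None else Some (H, E, B))
   | Play t left \<Rightarrow>
       (if t \<notin> H p then None else
        (case E of
           None \<Rightarrow> Some (H(p := H p - {t}), Some (fst t, snd t), B @ [t])
         | Some (l, r) \<Rightarrow>
             (if left then
                (if matches t l then Some (H(p := H p - {t}), Some (other t l, r), B @ [t]) else None)
              else
                (if matches t r then Some (H(p := H p - {t}), Some (l, other t r), B @ [t]) else None)))))"

definition game_over :: "(nat \<Rightarrow> tile set) \<Rightarrow> ends \<Rightarrow> bool" where
  "game_over H E \<longleftrightarrow> (case E of None \<Rightarrow> False
      | Some e \<Rightarrow> (\<exists>p<4. H p = {}) \<or> (\<forall>p<4. \<not> playable (H p) e))"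

fun run :: "(nat \<Rightarrow> tile set) \<Rightarrow> ends \<Rightarrow> tile list \<Rightarrow> nat \<Rightarrow> move list
    \<Rightarrow> ((nat \<Rightarrow> tile set) \<times> ends \<times> tile list) option" where
  "run H E B k [] = Some (H, E, B)"
| "run H E B k (m # ms) =
     (if game_over H E then None
      else (case step (k mod 4) H E B m of
              None \<Rightarrow> None
            | Some (H', E', B') \<Rightarrow> run H' E' B' (Suc k) ms))"

definition is_tranca :: "(nat \<Rightarrow> tile set) \<Rightarrow> ends \<Rightarrow> bool" where
  "is_tranca H E \<longleftrightarrow> (case E of None \<Rightarrow> False
      | Some e \<Rightarrow> (\<forall>p<4. H p \<noteq> {}) \<and> (\<forall>p<4. \<not> playable (H p) e))"

definition team_pips :: "(nat \<Rightarrow> tile set) \<Rightarrow> nat \<Rightarrow> nat" where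
  "team_pips H i = sum pips (H i) + sum pips (H (i + 2))"

definition winner_gets :: "(nat \<Rightarrow> tile set) \<Rightarrow> nat \<Rightarrow> bool" where
  "winner_gets H n \<longleftrightarrow>
     (team_pips H 0 < team_pips H 1 \<and> team_pips H 1 = n)
   \<or> (team_pips H 1 < team_pips H 0 \<and> team_pips H 0 = n)"

definition tranca_minima :: "(nat \<Rightarrow> tile set) \<Rightarrow> move list \<Rightarrow> (nat \<Rightarrow> tile set) \<Rightarrow> bool" where
  "tranca_minima H ms Hf \<longleftrightarrow> (\<exists>Ef Bf. run H None [] 0 ms = Some (Hf, Ef, Bf)
      \<and> is_tranca Hf Ef \<and> sum_list (map pips Bf) = 42)"

end

theory Submission
  imports Defs
begin

lemma ex4: "(\<exists>p<(4::nat). P p) \<longleftrightarrow> P 0 \<or> P 1 \<or> P 2 \<or> P 3"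
  by (auto simp: numeral_eq_Suc less_Suc_eq)
lemma all4: "(\<forall>p<(4::nat). P p) \<longleftrightarrow> P 0 \<and> P 1 \<and> P 2 \<and> P 3"
  by (auto simp: numeral_eq_Suc less_Suc_eq)

lemma run_step:
  assumes "\<not> game_over H E" "step (k mod 4) H E B m = Some (H', E', B')" "k' = Suc k"
  shows "run H E B k (m # ms) = run H' E' B' k' ms"
  using assms by simp
definition St0 :: "nat \<Rightarrow> tile set" where
  "St0 p = (if p = 0 then {(0,1),(0,5),(0,3),(2,4),(0,0),(1,4),(2,3)} else if p = 1 then {(4,6),(3,6),(4,5),(3,5),(4,4),(3,4),(3,3)} else if p = 2 then {(0,6),(1,3),(0,4),(0,2),(2,2),(1,2),(1,1)} else if p = 3 then {(5,6),(6,6),(5,5),(2,6),(1,6),(2,5),(1,5)} else {(5,6),(6,6),(5,5),(2,6),(1,6),(2,5),(1,5)})"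
definition St1 :: "nat \<Rightarrow> tile set" where
  "St1 p = (if p = 0 then {(0,5),(0,3),(2,4),(0,0),(1,4),(2,3)} else if p = 1 then {(4,6),(3,6),(4,5),(3,5),(4,4),(3,4),(3,3)} else if p = 2 then {(0,6),(1,3),(0,4),(0,2),(2,2),(1,2),(1,1)} else if p = 3 then {(5,6),(6,6),(5,5),(2,6),(1,6),(2,5),(1,5)} else {(5,6),(6,6),(5,5),(2,6),(1,6),(2,5),(1,5)})"
lemma s0: "run St0 None [] 0 (Play (0,1) True # ms) = run St1 (Some (0,1)) [(0,1)] 1 ms"
proof (rule run_step)
  show "\<not> game_over St0 None" by (simp add: game_over_def ex4 all4 playable_def matches_def St0_def)
  show "step (0 mod 4) St0 None [] (Play (0,1) True) = Some (St1, (Some (0,1)), [(0,1)])"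
    by (simp add: step_def playable_def matches_def other_def St0_def St1_def fun_eq_iff)
qed simp
definition St2 :: "nat \<Rightarrow> tile set" where
  "St2 p = (if p = 0 then {(0,5),(0,3),(2,4),(0,0),(1,4),(2,3)} else if p = 1 then {(4,6),(3,6),(4,5),(3,5),(4,4),(3,4),(3,3)} else if p = 2 then {(0,6),(1,3),(0,4),(0,2),(2,2),(1,2),(1,1)} else if p = 3 then {(5,6),(6,6),(5,5),(2,6),(1,6),(2,5),(1,5)} else {(5,6),(6,6),(5,5),(2,6),(1,6),(2,5),(1,5)})"
lemma s1: "run St1 (Some (0,1)) [(0,1)] 1 (Pass # ms) = run St2 (Some (0,1)) [(0,1)] 2 ms"
proof (rule run_step)
  show "\<not> game_over St1 (Some (0,1))" by (simp add: game_over_def ex4 all4 playable_def matches_def St1_def)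
  show "step (1 mod 4) St1 (Some (0,1)) [(0,1)] (Pass) = Some (St2, (Some (0,1)), [(0,1)])"
    by (simp add: step_def playable_def matches_def other_def St1_def St2_def fun_eq_iff)
qed simp
definition St3 :: "nat \<Rightarrow> tile set" where
  "St3 p = (if p = 0 then {(0,5),(0,3),(2,4),(0,0),(1,4),(2,3)} else if p = 1 then {(4,6),(3,6),(4,5),(3,5),(4,4),(3,4),(3,3)} else if p = 2 then {(1,3),(0,4),(0,2),(2,2),(1,2),(1,1)} else if p = 3 then {(5,6),(6,6),(5,5),(2,6),(1,6),(2,5),(1,5)} else {(5,6),(6,6),(5,5),(2,6),(1,6),(2,5),(1,5)})"
lemma s2: "run St2 (Some (0,1)) [(0,1)] 2 (Play (0,6) True # ms) = run St3 (Some (6,1)) [(0,1),(0,6)] 3 ms"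
proof (rule run_step)
  show "\<not> game_over St2 (Some (0,1))" by (simp add: game_over_def ex4 all4 playable_def matches_def St2_def)
  show "step (2 mod 4) St2 (Some (0,1)) [(0,1)] (Play (0,6) True) = Some (St3, (Some (6,1)), [(0,1),(0,6)])"
    by (simp add: step_def playable_def matches_def other_def St2_def St3_def fun_eq_iff)
qed simp
definition St4 :: "nat \<Rightarrow> tile set" where
  "St4 p = (if p = 0 then {(0,5),(0,3),(2,4),(0,0),(1,4),(2,3)} else if p = 1 then {(4,6),(3,6),(4,5),(3,5),(4,4),(3,4),(3,3)} else if p = 2 then {(1,3),(0,4),(0,2),(2,2),(1,2),(1,1)} else if p = 3 then {(6,6),(5,5),(2,6),(1,6),(2,5),(1,5)} else {(5,6),(6,6),(5,5),(2,6),(1,6),(2,5),(1,5)})"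
lemma s3: "run St3 (Some (6,1)) [(0,1),(0,6)] 3 (Play (5,6) True # ms) = run St4 (Some (5,1)) [(0,1),(0,6),(5,6)] 4 ms"
proof (rule run_step)
  show "\<not> game_over St3 (Some (6,1))" by (simp add: game_over_def ex4 all4 playable_def matches_def St3_def)
  show "step (3 mod 4) St3 (Some (6,1)) [(0,1),(0,6)] (Play (5,6) True) = Some (St4, (Some (5,1)), [(0,1),(0,6),(5,6)])"
    by (simp add: step_def playable_def matches_def other_def St3_def St4_def fun_eq_iff)
qed simp
definition St5 :: "nat \<Rightarrow> tile set" where
  "St5 p = (if p = 0 then {(0,3),(2,4),(0,0),(1,4),(2,3)} else if p = 1 then {(4,6),(3,6),(4,5),(3,5),(4,4),(3,4),(3,3)} else if p = 2 then {(1,3),(0,4),(0,2),(2,2),(1,2),(1,1)} else if p = 3 then {(6,6),(5,5),(2,6),(1,6),(2,5),(1,5)} else {(5,6),(6,6),(5,5),(2,6),(1,6),(2,5),(1,5)})"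
lemma s4: "run St4 (Some (5,1)) [(0,1),(0,6),(5,6)] 4 (Play (0,5) True # ms) = run St5 (Some (0,1)) [(0,1),(0,6),(5,6),(0,5)] 5 ms"
proof (rule run_step)
  show "\<not> game_over St4 (Some (5,1))" by (simp add: game_over_def ex4 all4 playable_def matches_def St4_def)
  show "step (4 mod 4) St4 (Some (5,1)) [(0,1),(0,6),(5,6)] (Play (0,5) True) = Some (St5, (Some (0,1)), [(0,1),(0,6),(5,6),(0,5)])"
    by (simp add: step_def playable_def matches_def other_def St4_def St5_def fun_eq_iff)
qed simp
definition St6 :: "nat \<Rightarrow> tile set" where
  "St6 p = (if p = 0 then {(0,3),(2,4),(0,0),(1,4),(2,3)} else if p = 1 then {(4,6),(3,6),(4,5),(3,5),(4,4),(3,4),(3,3)} else if p = 2 then {(1,3),(0,4),(0,2),(2,2),(1,2),(1,1)} else if p = 3 then {(6,6),(5,5),(2,6),(1,6),(2,5),(1,5)} else {(5,6),(6,6),(5,5),(2,6),(1,6),(2,5),(1,5)})"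
lemma s5: "run St5 (Some (0,1)) [(0,1),(0,6),(5,6),(0,5)] 5 (Pass # ms) = run St6 (Some (0,1)) [(0,1),(0,6),(5,6),(0,5)] 6 ms"
proof (rule run_step)
  show "\<not> game_over St5 (Some (0,1))" by (simp add: game_over_def ex4 all4 playable_def matches_def St5_def)
  show "step (5 mod 4) St5 (Some (0,1)) [(0,1),(0,6),(5,6),(0,5)] (Pass) = Some (St6, (Some (0,1)), [(0,1),(0,6),(5,6),(0,5)])"
    by (simp add: step_def playable_def matches_def other_def St5_def St6_def fun_eq_iff)
qed simp
definition St7 :: "nat \<Rightarrow> tile set" where
  "St7 p = (if p = 0 then {(0,3),(2,4),(0,0),(1,4),(2,3)} else if p = 1 then {(4,6),(3,6),(4,5),(3,5),(4,4),(3,4),(3,3)} else if p = 2 then {(0,4),(0,2),(2,2),(1,2),(1,1)} else if p = 3 then {(6,6),(5,5),(2,6),(1,6),(2,5),(1,5)} else {(5,6),(6,6),(5,5),(2,6),(1,6),(2,5),(1,5)})"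
lemma s6: "run St6 (Some (0,1)) [(0,1),(0,6),(5,6),(0,5)] 6 (Play (1,3) False # ms) = run St7 (Some (0,3)) [(0,1),(0,6),(5,6),(0,5),(1,3)] 7 ms"
proof (rule run_step)
  show "\<not> game_over St6 (Some (0,1))" by (simp add: game_over_def ex4 all4 playable_def matches_def St6_def)
  show "step (6 mod 4) St6 (Some (0,1)) [(0,1),(0,6),(5,6),(0,5)] (Play (1,3) False) = Some (St7, (Some (0,3)), [(0,1),(0,6),(5,6),(0,5),(1,3)])"
    by (simp add: step_def playable_def matches_def other_def St6_def St7_def fun_eq_iff)
qed simp
definition St8 :: "nat \<Rightarrow> tile set" where
  "St8 p = (if p = 0 then {(0,3),(2,4),(0,0),(1,4),(2,3)} else if p = 1 then {(4,6),(3,6),(4,5),(3,5),(4,4),(3,4),(3,3)} else if p = 2 then {(0,4),(0,2),(2,2),(1,2),(1,1)} else if p = 3 then {(6,6),(5,5),(2,6),(1,6),(2,5),(1,5)} else {(5,6),(6,6),(5,5),(2,6),(1,6),(2,5),(1,5)})"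
lemma s7: "run St7 (Some (0,3)) [(0,1),(0,6),(5,6),(0,5),(1,3)] 7 (Pass # ms) = run St8 (Some (0,3)) [(0,1),(0,6),(5,6),(0,5),(1,3)] 8 ms"
proof (rule run_step)
  show "\<not> game_over St7 (Some (0,3))" by (simp add: game_over_def ex4 all4 playable_def matches_def St7_def)
  show "step (7 mod 4) St7 (Some (0,3)) [(0,1),(0,6),(5,6),(0,5),(1,3)] (Pass) = Some (St8, (Some (0,3)), [(0,1),(0,6),(5,6),(0,5),(1,3)])"
    by (simp add: step_def playable_def matches_def other_def St7_def St8_def fun_eq_iff)
qed simp
definition St9 :: "nat \<Rightarrow> tile set" where
  "St9 p = (if p = 0 then {(2,4),(0,0),(1,4),(2,3)} else if p = 1 then {(4,6),(3,6),(4,5),(3,5),(4,4),(3,4),(3,3)} else if p = 2 then {(0,4),(0,2),(2,2),(1,2),(1,1)} else if p = 3 then {(6,6),(5,5),(2,6),(1,6),(2,5),(1,5)} else {(5,6),(6,6),(5,5),(2,6),(1,6),(2,5),(1,5)})"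
lemma s8: "run St8 (Some (0,3)) [(0,1),(0,6),(5,6),(0,5),(1,3)] 8 (Play (0,3) False # ms) = run St9 (Some (0,0)) [(0,1),(0,6),(5,6),(0,5),(1,3),(0,3)] 9 ms"
proof (rule run_step)
  show "\<not> game_over St8 (Some (0,3))" by (simp add: game_over_def ex4 all4 playable_def matches_def St8_def)
  show "step (8 mod 4) St8 (Some (0,3)) [(0,1),(0,6),(5,6),(0,5),(1,3)] (Play (0,3) False) = Some (St9, (Some (0,0)), [(0,1),(0,6),(5,6),(0,5),(1,3),(0,3)])"
    by (simp add: step_def playable_def matches_def other_def St8_def St9_def fun_eq_iff)
qed simp
definition St10 :: "nat \<Rightarrow> tile set" where
  "St10 p = (if p = 0 then {(2,4),(0,0),(1,4),(2,3)} else if p = 1 then {(4,6),(3,6),(4,5),(3,5),(4,4),(3,4),(3,3)} else if p = 2 then {(0,4),(0,2),(2,2),(1,2),(1,1)} else if p = 3 then {(6,6),(5,5),(2,6),(1,6),(2,5),(1,5)} else {(5,6),(6,6),(5,5),(2,6),(1,6),(2,5),(1,5)})"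
lemma s9: "run St9 (Some (0,0)) [(0,1),(0,6),(5,6),(0,5),(1,3),(0,3)] 9 (Pass # ms) = run St10 (Some (0,0)) [(0,1),(0,6),(5,6),(0,5),(1,3),(0,3)] 10 ms"
proof (rule run_step)
  show "\<not> game_over St9 (Some (0,0))" by (simp add: game_over_def ex4 all4 playable_def matches_def St9_def)
  show "step (9 mod 4) St9 (Some (0,0)) [(0,1),(0,6),(5,6),(0,5),(1,3),(0,3)] (Pass) = Some (St10, (Some (0,0)), [(0,1),(0,6),(5,6),(0,5),(1,3),(0,3)])"
    by (simp add: step_def playable_def matches_def other_def St9_def St10_def fun_eq_iff)
qed simp
definition St11 :: "nat \<Rightarrow> tile set" where
  "St11 p = (if p = 0 then {(2,4),(0,0),(1,4),(2,3)} else if p = 1 then {(4,6),(3,6),(4,5),(3,5),(4,4),(3,4),(3,3)} else if p = 2 then {(0,2),(2,2),(1,2),(1,1)} else if p = 3 then {(6,6),(5,5),(2,6),(1,6),(2,5),(1,5)} else {(5,6),(6,6),(5,5),(2,6),(1,6),(2,5),(1,5)})"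
lemma s10: "run St10 (Some (0,0)) [(0,1),(0,6),(5,6),(0,5),(1,3),(0,3)] 10 (Play (0,4) True # ms) = run St11 (Some (4,0)) [(0,1),(0,6),(5,6),(0,5),(1,3),(0,3),(0,4)] 11 ms"
proof (rule run_step)
  show "\<not> game_over St10 (Some (0,0))" by (simp add: game_over_def ex4 all4 playable_def matches_def St10_def)
  show "step (10 mod 4) St10 (Some (0,0)) [(0,1),(0,6),(5,6),(0,5),(1,3),(0,3)] (Play (0,4) True) = Some (St11, (Some (4,0)), [(0,1),(0,6),(5,6),(0,5),(1,3),(0,3),(0,4)])"
    by (simp add: step_def playable_def matches_def other_def St10_def St11_def fun_eq_iff)
qed simp
definition St12 :: "nat \<Rightarrow> tile set" where
  "St12 p = (if p = 0 then {(2,4),(0,0),(1,4),(2,3)} else if p = 1 then {(4,6),(3,6),(4,5),(3,5),(4,4),(3,4),(3,3)} else if p = 2 then {(0,2),(2,2),(1,2),(1,1)} else if p = 3 then {(6,6),(5,5),(2,6),(1,6),(2,5),(1,5)} else {(5,6),(6,6),(5,5),(2,6),(1,6),(2,5),(1,5)})"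
lemma s11: "run St11 (Some (4,0)) [(0,1),(0,6),(5,6),(0,5),(1,3),(0,3),(0,4)] 11 (Pass # ms) = run St12 (Some (4,0)) [(0,1),(0,6),(5,6),(0,5),(1,3),(0,3),(0,4)] 12 ms"
proof (rule run_step)
  show "\<not> game_over St11 (Some (4,0))" by (simp add: game_over_def ex4 all4 playable_def matches_def St11_def)
  show "step (11 mod 4) St11 (Some (4,0)) [(0,1),(0,6),(5,6),(0,5),(1,3),(0,3),(0,4)] (Pass) = Some (St12, (Some (4,0)), [(0,1),(0,6),(5,6),(0,5),(1,3),(0,3),(0,4)])"
    by (simp add: step_def playable_def matches_def other_def St11_def St12_def fun_eq_iff)
qed simp
definition St13 :: "nat \<Rightarrow> tile set" where
  "St13 p = (if p = 0 then {(0,0),(1,4),(2,3)} else if p = 1 then {(4,6),(3,6),(4,5),(3,5),(4,4),(3,4),(3,3)} else if p = 2 then {(0,2),(2,2),(1,2),(1,1)} else if p = 3 then {(6,6),(5,5),(2,6),(1,6),(2,5),(1,5)} else {(5,6),(6,6),(5,5),(2,6),(1,6),(2,5),(1,5)})"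
lemma s12: "run St12 (Some (4,0)) [(0,1),(0,6),(5,6),(0,5),(1,3),(0,3),(0,4)] 12 (Play (2,4) True # ms) = run St13 (Some (2,0)) [(0,1),(0,6),(5,6),(0,5),(1,3),(0,3),(0,4),(2,4)] 13 ms"
proof (rule run_step)
  show "\<not> game_over St12 (Some (4,0))" by (simp add: game_over_def ex4 all4 playable_def matches_def St12_def)
  show "step (12 mod 4) St12 (Some (4,0)) [(0,1),(0,6),(5,6),(0,5),(1,3),(0,3),(0,4)] (Play (2,4) True) = Some (St13, (Some (2,0)), [(0,1),(0,6),(5,6),(0,5),(1,3),(0,3),(0,4),(2,4)])"
    by (simp add: step_def playable_def matches_def other_def St12_def St13_def fun_eq_iff)
qed simp
definition St14 :: "nat \<Rightarrow> tile set" where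
  "St14 p = (if p = 0 then {(0,0),(1,4),(2,3)} else if p = 1 then {(4,6),(3,6),(4,5),(3,5),(4,4),(3,4),(3,3)} else if p = 2 then {(0,2),(2,2),(1,2),(1,1)} else if p = 3 then {(6,6),(5,5),(2,6),(1,6),(2,5),(1,5)} else {(5,6),(6,6),(5,5),(2,6),(1,6),(2,5),(1,5)})"
lemma s13: "run St13 (Some (2,0)) [(0,1),(0,6),(5,6),(0,5),(1,3),(0,3),(0,4),(2,4)] 13 (Pass # ms) = run St14 (Some (2,0)) [(0,1),(0,6),(5,6),(0,5),(1,3),(0,3),(0,4),(2,4)] 14 ms"
proof (rule run_step)
  show "\<not> game_over St13 (Some (2,0))" by (simp add: game_over_def ex4 all4 playable_def matches_def St13_def)
  show "step (13 mod 4) St13 (Some (2,0)) [(0,1),(0,6),(5,6),(0,5),(1,3),(0,3),(0,4),(2,4)] (Pass) = Some (St14, (Some (2,0)), [(0,1),(0,6),(5,6),(0,5),(1,3),(0,3),(0,4),(2,4)])"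
    by (simp add: step_def playable_def matches_def other_def St13_def St14_def fun_eq_iff)
qed simp
definition St15 :: "nat \<Rightarrow> tile set" where
  "St15 p = (if p = 0 then {(0,0),(1,4),(2,3)} else if p = 1 then {(4,6),(3,6),(4,5),(3,5),(4,4),(3,4),(3,3)} else if p = 2 then {(2,2),(1,2),(1,1)} else if p = 3 then {(6,6),(5,5),(2,6),(1,6),(2,5),(1,5)} else {(5,6),(6,6),(5,5),(2,6),(1,6),(2,5),(1,5)})"
lemma s14: "run St14 (Some (2,0)) [(0,1),(0,6),(5,6),(0,5),(1,3),(0,3),(0,4),(2,4)] 14 (Play (0,2) True # ms) = run St15 (Some (0,0)) [(0,1),(0,6),(5,6),(0,5),(1,3),(0,3),(0,4),(2,4),(0,2)] 15 ms"
proof (rule run_step)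
  show "\<not> game_over St14 (Some (2,0))" by (simp add: game_over_def ex4 all4 playable_def matches_def St14_def)
  show "step (14 mod 4) St14 (Some (2,0)) [(0,1),(0,6),(5,6),(0,5),(1,3),(0,3),(0,4),(2,4)] (Play (0,2) True) = Some (St15, (Some (0,0)), [(0,1),(0,6),(5,6),(0,5),(1,3),(0,3),(0,4),(2,4),(0,2)])"
    by (simp add: step_def playable_def matches_def other_def St14_def St15_def fun_eq_iff)
qed simp
definition St16 :: "nat \<Rightarrow> tile set" where
  "St16 p = (if p = 0 then {(0,0),(1,4),(2,3)} else if p = 1 then {(4,6),(3,6),(4,5),(3,5),(4,4),(3,4),(3,3)} else if p = 2 then {(2,2),(1,2),(1,1)} else if p = 3 then {(6,6),(5,5),(2,6),(1,6),(2,5),(1,5)} else {(5,6),(6,6),(5,5),(2,6),(1,6),(2,5),(1,5)})"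
lemma s15: "run St15 (Some (0,0)) [(0,1),(0,6),(5,6),(0,5),(1,3),(0,3),(0,4),(2,4),(0,2)] 15 (Pass # ms) = run St16 (Some (0,0)) [(0,1),(0,6),(5,6),(0,5),(1,3),(0,3),(0,4),(2,4),(0,2)] 16 ms"
proof (rule run_step)
  show "\<not> game_over St15 (Some (0,0))" by (simp add: game_over_def ex4 all4 playable_def matches_def St15_def)
  show "step (15 mod 4) St15 (Some (0,0)) [(0,1),(0,6),(5,6),(0,5),(1,3),(0,3),(0,4),(2,4),(0,2)] (Pass) = Some (St16, (Some (0,0)), [(0,1),(0,6),(5,6),(0,5),(1,3),(0,3),(0,4),(2,4),(0,2)])"
    by (simp add: step_def playable_def matches_def other_def St15_def St16_def fun_eq_iff)
qed simp
definition St17 :: "nat \<Rightarrow> tile set" where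
  "St17 p = (if p = 0 then {(1,4),(2,3)} else if p = 1 then {(4,6),(3,6),(4,5),(3,5),(4,4),(3,4),(3,3)} else if p = 2 then {(2,2),(1,2),(1,1)} else if p = 3 then {(6,6),(5,5),(2,6),(1,6),(2,5),(1,5)} else {(5,6),(6,6),(5,5),(2,6),(1,6),(2,5),(1,5)})"
lemma s16: "run St16 (Some (0,0)) [(0,1),(0,6),(5,6),(0,5),(1,3),(0,3),(0,4),(2,4),(0,2)] 16 (Play (0,0) True # ms) = run St17 (Some (0,0)) [(0,1),(0,6),(5,6),(0,5),(1,3),(0,3),(0,4),(2,4),(0,2),(0,0)] 17 ms"
proof (rule run_step)
  show "\<not> game_over St16 (Some (0,0))" by (simp add: game_over_def ex4 all4 playable_def matches_def St16_def)
  show "step (16 mod 4) St16 (Some (0,0)) [(0,1),(0,6),(5,6),(0,5),(1,3),(0,3),(0,4),(2,4),(0,2)] (Play (0,0) True) = Some (St17, (Some (0,0)), [(0,1),(0,6),(5,6),(0,5),(1,3),(0,3),(0,4),(2,4),(0,2),(0,0)])"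
    by (simp add: step_def playable_def matches_def other_def St16_def St17_def fun_eq_iff)
qed simp
definition ms0 :: "move list" where
  "ms0 = [Play (0,1) True, Pass, Play (0,6) True, Play (5,6) True, Play (0,5) True, Pass, Play (1,3) False, Pass, Play (0,3) False, Pass, Play (0,4) True, Pass, Play (2,4) True, Pass, Play (0,2) True, Pass, Play (0,0) True]"
lemma runeq: "run St0 None [] 0 ms0 = Some (St17, (Some (0,0)), [(0,1),(0,6),(5,6),(0,5),(1,3),(0,3),(0,4),(2,4),(0,2),(0,0)])"
  unfolding ms0_def
  by (simp only: s0 s1 s2 s3 s4 s5 s6 s7 s8 s9 s10 s11 s12 s13 s14 s15 s16 run.simps(1))
lemma e01: "St0 0 \<inter> St0 (Suc 0) = {}" by (simp add: St0_def)
lemma e10: "St0 (Suc 0) \<inter> St0 0 = {}" by (simp add: St0_def)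
lemma e12: "St0 (Suc 0) \<inter> St0 2 = {}" by (simp add: St0_def)
lemma e13: "St0 (Suc 0) \<inter> St0 3 = {}" by (simp add: St0_def)
lemma e21: "St0 2 \<inter> St0 (Suc 0) = {}" by (simp add: St0_def)
lemma e31: "St0 3 \<inter> St0 (Suc 0) = {}" by (simp add: St0_def)
lemma d01: "St0 0 \<inter> St0 1 = {}" by (simp add: St0_def)
lemma d02: "St0 0 \<inter> St0 2 = {}" by (simp add: St0_def)
lemma d03: "St0 0 \<inter> St0 3 = {}" by (simp add: St0_def)
lemma d10: "St0 1 \<inter> St0 0 = {}" by (simp add: St0_def)
lemma d12: "St0 1 \<inter> St0 2 = {}" by (simp add: St0_def)
lemma d13: "St0 1 \<inter> St0 3 = {}" by (simp add: St0_def)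
lemma d20: "St0 2 \<inter> St0 0 = {}" by (simp add: St0_def)
lemma d21: "St0 2 \<inter> St0 1 = {}" by (simp add: St0_def)
lemma d23: "St0 2 \<inter> St0 3 = {}" by (simp add: St0_def)
lemma d30: "St0 3 \<inter> St0 0 = {}" by (simp add: St0_def)
lemma d31: "St0 3 \<inter> St0 1 = {}" by (simp add: St0_def)
lemma d32: "St0 3 \<inter> St0 2 = {}" by (simp add: St0_def)

lemma u2: "all_tiles \<subseteq> St0 0 \<union> St0 1 \<union> St0 2 \<union> St0 3"
proof
  fix x assume "x \<in> all_tiles"
  then obtain a b where x: "x = (a,b)" and ab: "a \<le> b" "b \<le> 6" by (auto simp: all_tiles_def)
  have B: "b = 0 \<or> b = 1 \<or> b = 2 \<or> b = 3 \<or> b = 4 \<or> b = 5 \<or> b = 6" using ab by arith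
  have A: "a = 0 \<or> a = 1 \<or> a = 2 \<or> a = 3 \<or> a = 4 \<or> a = 5 \<or> a = 6" using ab by arith
  show "x \<in> St0 0 \<union> St0 1 \<union> St0 2 \<union> St0 3"
    using A B ab unfolding x by (elim disjE) (simp_all add: St0_def)
qed

lemma deal: "is_deal St0"
proof -
  have U: "(\<Union>p<4. St0 p) = St0 0 \<union> St0 1 \<union> St0 2 \<union> St0 3"
    by (auto simp: lessThan_def numeral_eq_Suc less_Suc_eq)
  have c: "\<forall>p<4. St0 p \<subseteq> all_tiles \<and> card (St0 p) = 7"
    unfolding all4 by (simp add: St0_def all_tiles_def)
  have d: "\<forall>p<4. \<forall>q<4. p \<noteq> q \<longrightarrow> St0 p \<inter> St0 q = {}"
    unfolding all4 by (simp add: d01 d02 d03 d10 d12 d13 d20 d21 d23 d30 d31 d32 e01 e10 e12 e13 e21 e31)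
  have u1: "St0 0 \<union> St0 1 \<union> St0 2 \<union> St0 3 \<subseteq> all_tiles"
    by (simp add: St0_def all_tiles_def)
  show ?thesis
    unfolding is_deal_def U using c d u1 u2 by blast
qed

theorem mainTheorem8:
  shows "\<exists>H ms Hf. is_deal H \<and> tranca_minima H ms Hf \<and> winner_gets Hf 107"
proof (intro exI conjI)
  show "is_deal St0" by (rule deal)
  show "tranca_minima St0 ms0 St17"
    unfolding tranca_minima_def runeq
    by (simp add: is_tranca_def all4 playable_def matches_def St17_def pips_def)
  show "winner_gets St17 107"
    by (simp add: winner_gets_def team_pips_def St17_def pips_def)
qed

end
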